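(* With $f$ as defined in the context, for $b,c\in(-1,\infty)$ the quantity $f(b,c)$ is strictly decreasing in $b$ (for fixed $c$) and strictly increasing in $c$ (for fixed $b$).
   Context: Let $u_n=(-1)^{s_2(n)}$, where $s_2(n)$ is the sum of the binary digits of the non-negative integer $n$ (Thue–Morse sequence with values $\pm1$). For $b,c\in(-1,\infty)$ define $f(b,c)=\prod_{n=1}^\infty\left(\frac{n+b}{n+c}\right)^{u_n}$ (limit of partial products; it converges). *)

theory Defs
  imports "HOL-Analysis.Analysis"
begin

fun s2 :: "nat \<Rightarrow> nat" where
  "s2 n = (if n = 0 then 0 else n mod 2 + s2 (n div 2))"

declare s2.simps[simp del]

definition tm :: "nat \<Rightarrow> real" where
  "tm n = (-1) ^ s2 n"

definition f :: "real \<Rightarrow> real \<Rightarrow> real" where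
  "f b c = lim (\<lambda>N. \<Prod>n=1..N. ((real n + b) / (real n + c)) powr tm n)"

end

theory Submission imports Defs "HOL-Real_Asymp.Real_Asymp" begin

lemma s2_0: "s2 0 = 0" by (subst s2.simps) simp
lemma s2_double: "s2 (2*k) = s2 k"
  by (cases "k=0") (simp add: s2_0, subst s2.simps, simp)
lemma s2_double1: "s2 (2*k+1) = s2 k + 1"
  by (subst s2.simps) auto
lemma tm_double: "tm (2*k) = tm k" by (simp add: tm_def s2_double)
lemma tm_double1: "tm (2*k+1) = - tm k" unfolding tm_def s2_double1 by simp
lemma tm_1: "tm 1 = -1" using tm_double1[of 0] by (simp add: tm_def s2.simps)
lemma abs_tm: "\<bar>tm n\<bar> = 1" by (simp add: tm_def)

definition h :: "real \<Rightarrow> real \<Rightarrow> nat \<Rightarrow> real" where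
  "h b c n = ln (real n + b) - ln (real n + c)"

definition A :: "real \<Rightarrow> real \<Rightarrow> nat \<Rightarrow> real" where
  "A b c N = (\<Sum>n=1..N. tm n * h b c n)"

lemma h_lim: "(\<lambda>n. h b c n) \<longlonglongrightarrow> 0"
  unfolding h_def by real_asymp

lemma h_neg: assumes "b > -1" "b < c" "n \<ge> 1" shows "h b c n < 0"
  using assms unfolding h_def by simp

lemma h_mono_step: assumes "b > -1" "b < c" "n \<ge> 1" shows "h b c n < h b c (Suc n)"
proof -
  have p: "real n + b > 0" "real n + c > 0" using assms by auto
  have "h b c n = ln ((real n + b)/(real n + c))" unfolding h_def using p by (simp add: ln_div)
  moreover have "h b c (Suc n) = ln ((real n + 1 + b)/(real n + 1 + c))" unfolding h_def using p by (simp add: ln_div add_ac)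
  moreover have "(real n + b)/(real n + c) < (real n + 1 + b)/(real n + 1 + c)"
    using p assms by (simp add: field_simps)
  ultimately show ?thesis using p by simp
qed

lemma h_mono: assumes "b > -1" "b < c" "1 \<le> n" "n \<le> m" shows "h b c n \<le> h b c m"
  using assms(4,3)
proof (induction m rule: dec_induct)
  case base then show ?case by simp
next
  case (step m) then show ?case using h_mono_step[OF assms(1,2), of m] assms(3) by linarith
qed


lemma key:
  assumes b: "b > -1" and bc: "b < c"
  shows "\<exists>L. A b c \<longlonglongrightarrow> L \<and> L > 0"
proof -
  define g where "g = h b c"
  define a where "a = (\<lambda>n. tm n * g n)"
  define r where "r = (\<lambda>k. tm (k+1) * (g (2*(k+1)) - g (2*(k+1)+1)))"
  have gm: "g n \<le> g m" if "1 \<le> n" "n \<le> m" for n m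
    unfolding g_def using h_mono[OF b bc that] .
  have gneg: "g n < 0" if "n \<ge> 1" for n unfolding g_def using h_neg[OF b bc that] .
  have ar: "\<bar>r k\<bar> = g (2*(k+1)+1) - g (2*(k+1))" for k
  proof -
    have "g (2*(k+1)) \<le> g (2*(k+1)+1)" by (rule gm) auto
    then show ?thesis unfolding r_def abs_mult abs_tm by simp
  qed
  have bnd: "(\<Sum>k<K. \<bar>r k\<bar>) \<le> g (2*K+2) - g 2" for K
  proof (induction K)
    case 0 then show ?case by (simp add: numeral_2_eq_2)
  next
    case (Suc K)
    have "g (2*(K+1)+1) \<le> g (2*Suc K + 2)" by (rule gm) auto
    then show ?case using Suc by (simp add: ar)
  qed
  have bnd2: "(\<Sum>k<K. \<bar>r k\<bar>) \<le> - g 2" for K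
    using bnd[of K] gneg[of "2*K+2"] by simp
  have sa: "summable (\<lambda>k. \<bar>r k\<bar>)"
    by (rule bounded_imp_summable[where B="- g 2"]) (simp, metis bnd2 sum.lessThan_Suc lessThan_Suc_atMost)
  have sr: "summable r" using sa by (rule summable_rabs_cancel)
  have sle: "\<bar>suminf r\<bar> \<le> - g 2"
  proof -
    have "\<bar>suminf r\<bar> \<le> (\<Sum>k. \<bar>r k\<bar>)" using summable_norm[of r] sa by simp
    also have "\<dots> \<le> - g 2" by (rule suminf_le_const[OF sa bnd2])
    finally show ?thesis .
  qed
  define L where "L = a 1 + suminf r"
  have a1: "a 1 = - g 1" unfolding a_def using tm_1 by simp
  have g12: "g 1 < g 2" unfolding g_def using h_mono_step[OF b bc, of 1] by (simp add: numeral_2_eq_2)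
  have Lpos: "L > 0" unfolding L_def a1 using sle g12 by linarith
  define S where "S = (\<lambda>K. \<Sum>n=1..2*K+1. a n)"
  have Seq: "S K = a 1 + (\<Sum>k<K. r k)" for K
  proof (induction K)
    case 0 then show ?case by (simp add: S_def)
  next
    case (Suc K)
    have "S (Suc K) = S K + a (2*K+2) + a (2*K+3)"
      unfolding S_def by (simp add: numeral_3_eq_3 numeral_2_eq_2)
    moreover have "a (2*K+2) + a (2*K+3) = r K"
      using tm_double[of "K+1"] tm_double1[of "K+1"]
      unfolding a_def r_def by (simp add: algebra_simps numeral_3_eq_3 numeral_2_eq_2)
    ultimately show ?case using Suc by simp
  qed
  have SL: "S \<longlonglongrightarrow> L" unfolding Seq L_def
    by (intro tendsto_add tendsto_const summable_LIMSEQ sr)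
  have S2: "(\<lambda>N. S (N div 2)) \<longlonglongrightarrow> L"
    by (rule filterlim_compose[OF SL filterlim_at_top_div_const_nat]) simp
  have gl: "g \<longlonglongrightarrow> 0" unfolding g_def by (rule h_lim)
  have E: "(\<lambda>N. if odd N then a (N+1) else 0) \<longlonglongrightarrow> 0"
  proof (rule Lim_null_comparison)
    show "\<forall>\<^sub>F N in sequentially. norm (if odd N then a (N+1) else 0) \<le> \<bar>g (N+1)\<bar>"
      by (auto simp: a_def abs_mult abs_tm)
    show "(\<lambda>N. \<bar>g (N+1)\<bar>) \<longlonglongrightarrow> 0"
      using tendsto_rabs[OF LIMSEQ_Suc[OF gl]] by simp
  qed
  have AS: "A b c (N+1) = S (N div 2) + (if odd N then a (N+1) else 0)" for N
  proof (cases "even N")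
    case True
    then obtain m where m: "N = 2*m" by blast
    show ?thesis unfolding A_def S_def a_def g_def m by simp
  next
    case False
    then obtain m where m: "N = 2*m+1" using oddE by blast
    have "A b c (N+1) = (\<Sum>n=1..2*m+1. a n) + a (2*m+2)"
      unfolding A_def a_def g_def m by (simp add: numeral_2_eq_2)
    then show ?thesis unfolding S_def m by simp
  qed
  have "(\<lambda>N. A b c (N+1)) \<longlonglongrightarrow> L"
    unfolding AS using tendsto_add[OF S2 E] by simp
  then have "A b c \<longlonglongrightarrow> L" by (simp add: LIMSEQ_imp_Suc)
  with Lpos show ?thesis by blast
qed


lemma A_same: "A b b = (\<lambda>_. 0)" by (rule ext) (simp add: A_def h_def)

lemma A_conv: assumes "b > -1" "c > -1" shows "convergent (A b c)"
proof -
  consider "b < c" | "b = c" | "c < b" by linarith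
  then show ?thesis
  proof cases
    case 1 then show ?thesis using key[OF assms(1)] by (auto simp: convergent_def)
  next
    case 2 then show ?thesis by (simp add: A_same convergent_const)
  next
    case 3
    then obtain L where "A c b \<longlonglongrightarrow> L" using key[OF assms(2)] by auto
    then have "(\<lambda>N. - A c b N) \<longlonglongrightarrow> - L" by (rule tendsto_minus)
    moreover have "(\<lambda>N. - A c b N) = A b c"
      by (rule ext) (simp add: A_def h_def sum_negf[symmetric] algebra_simps)
    ultimately show ?thesis by (auto simp: convergent_def)
  qed
qed

lemma L_pos: assumes "b > -1" "b < c" shows "lim (A b c) > 0"
  using key[OF assms] limI by fastforce

lemma f_eq: assumes "b > -1" "c > -1" shows "f b c = exp (lim (A b c))"
proof -
  have "(\<lambda>N. \<Prod>n=1..N. ((real n + b) / (real n + c)) powr tm n) = (\<lambda>N. exp (A b c N))"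
  proof (rule ext)
    fix N
    have "(\<Prod>n=1..N. ((real n + b) / (real n + c)) powr tm n) = (\<Prod>n=1..N. exp (tm n * h b c n))"
    proof (rule prod.cong)
      fix n assume "n \<in> {1..N}"
      then have p: "real n + b > 0" "real n + c > 0" using assms by auto
      then show "((real n + b) / (real n + c)) powr tm n = exp (tm n * h b c n)"
        by (simp add: powr_def h_def ln_div)
    qed simp
    then show "(\<Prod>n=1..N. ((real n + b) / (real n + c)) powr tm n) = exp (A b c N)"
      by (simp add: A_def exp_sum)
  qed
  moreover have "(\<lambda>N. exp (A b c N)) \<longlonglongrightarrow> exp (lim (A b c))"
    using A_conv[OF assms] by (intro tendsto_exp) (simp add: convergent_LIMSEQ_iff)
  ultimately show ?thesis unfolding f_def by (simp add: limI)
qed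

lemma L_diff: assumes "b > -1" "c > -1" "d > -1"
  shows "lim (A b d) - lim (A c d) = lim (A b c)"
proof -
  have "(\<lambda>N. A b d N - A c d N) \<longlonglongrightarrow> lim (A b d) - lim (A c d)"
    using A_conv[OF assms(1,3)] A_conv[OF assms(2,3)]
    by (intro tendsto_diff) (simp_all add: convergent_LIMSEQ_iff)
  moreover have "(\<lambda>N. A b d N - A c d N) = A b c"
    by (rule ext) (simp add: A_def h_def sum_subtractf[symmetric] algebra_simps)
  ultimately show ?thesis by (simp add: limI)
qed

theorem theorem2:
  shows "(\<forall>c > -1. \<forall>b1 > -1. \<forall>b2 > -1. b1 < b2 \<longrightarrow> f b2 c < f b1 c) \<and>
         (\<forall>b > -1. \<forall>c1 > -1. \<forall>c2 > -1. c1 < c2 \<longrightarrow> f b c1 < f b c2)"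
proof (intro conjI allI impI)
  fix c b1 b2 :: real assume h: "c > -1" "b1 > -1" "b2 > -1" "b1 < b2"
  have "lim (A b1 c) - lim (A b2 c) > 0" using L_diff[OF h(2,3,1)] L_pos[OF h(2,4)] by simp
  then show "f b2 c < f b1 c" using f_eq h by simp
next
  fix b c1 c2 :: real assume h: "b > -1" "c1 > -1" "c2 > -1" "c1 < c2"
  have "lim (A c1 b) - lim (A c2 b) > 0" using L_diff[OF h(2,3,1)] L_pos[OF h(2,4)] by simp
  moreover have "lim (A b c1) = - lim (A c1 b)" "lim (A b c2) = - lim (A c2 b)"
    using L_diff[OF h(1,2,1)] L_diff[OF h(1,3,1)]
    by (simp_all add: A_same limI)
  ultimately show "f b c1 < f b c2" using f_eq h by simp
qed

end
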